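(* For $\tilde\varphi=\mathrm{Id}+f\in\widetilde{\operatorname{Diff}}(S^1)$ define $R(\tilde\varphi)=2(\tilde\varphi')^{1/2}e^{i(\tilde\varphi-\mathrm{Id})/2}=2(1+f')^{1/2}e^{if/2}\in C^\infty_{2\pi\text{-per}}(\mathbb R,\mathbb C)$. Then $T_{\tilde\varphi}R.h=(\tilde\varphi')^{-1/2}h'e^{if/2}+i(\tilde\varphi')^{1/2}e^{if/2}h$, and for tangent vectors $h=X_1\circ\tilde\varphi$, $k=X_2\circ\tilde\varphi$ (with $X_1,X_2$ smooth $2\pi$-periodic) $$\operatorname{Re}\int_0^{2\pi}T_{\tilde\varphi}R.h\ \overline{T_{\tilde\varphi}R.k}\,dx=\int_0^{2\pi}\big(X_1X_2+X_1'X_2'\big)\,dx,$$ i.e. the pullback under $R$ of the $L^2$ inner product on $C^\infty_{2\pi\text{-per}}(\mathbb R,\mathbb C)$ is the right-invariant Sobolev $H^1$-metric.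
   Context: $\widetilde{\operatorname{Diff}}(S^1)$ is the group of lifts $\tilde\varphi(x)=x+f(x)$, $f\in C^\infty(\mathbb R)$ $2\pi$-periodic with $f'>-1$, of orientation-preserving smooth diffeomorphisms $\varphi$ of $S^1$ via $\varphi(e^{ix})=e^{i\tilde\varphi(x)}$; tangent vectors at $\tilde\varphi$ are $2\pi$-periodic smooth functions $h$ (variations of $f$), written $h=X\circ\tilde\varphi$. The right-invariant $H^1$-metric is $G_\varphi(X\circ\varphi,Y\circ\varphi)=\int (XY+X'Y')\,dx$ over one period. *)

theory Defs
  imports "HOL-Analysis.Analysis"
begin

definition smooth_fun :: "(real \<Rightarrow> real) \<Rightarrow> bool" where
  "smooth_fun g \<longleftrightarrow> (\<forall>n x. ((deriv ^^ n) g) differentiable (at x))"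

definition periodic_2pi :: "(real \<Rightarrow> 'b) \<Rightarrow> bool" where
  "periodic_2pi g \<longleftrightarrow> (\<forall>x. g (x + 2 * pi) = g x)"

text \<open>The lift phi = Id + f of an element of the universal cover of Diff(S^1).\<close>
definition lift_diff :: "(real \<Rightarrow> real) \<Rightarrow> bool" where
  "lift_diff f \<longleftrightarrow> smooth_fun f \<and> periodic_2pi f \<and> (\<forall>x. deriv f x > -1)"

definition R_map :: "(real \<Rightarrow> real) \<Rightarrow> real \<Rightarrow> complex" where
  "R_map f x = 2 * complex_of_real (sqrt (1 + deriv f x)) * cis (f x / 2)"

definition TR :: "(real \<Rightarrow> real) \<Rightarrow> (real \<Rightarrow> real) \<Rightarrow> real \<Rightarrow> complex" where
  "TR f h x = complex_of_real (1 / sqrt (1 + deriv f x) * deriv h x) * cis (f x / 2)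
             + \<i> * complex_of_real (sqrt (1 + deriv f x)) * cis (f x / 2) * complex_of_real (h x)"

end

theory Submission
  imports Defs
begin

lemma sm_diff: "smooth_fun g \<Longrightarrow> g differentiable (at x)"
  unfolding smooth_fun_def by (metis funpow_0)

lemma sm_ddiff: "smooth_fun g \<Longrightarrow> deriv g differentiable (at x)"
proof -
  assume "smooth_fun g"
  then have "((deriv ^^ 1) g) differentiable (at x)" unfolding smooth_fun_def by blast
  then show ?thesis by simp
qed

lemma sm_has: "smooth_fun g \<Longrightarrow> (g has_real_derivative deriv g x) (at x)"
  using sm_diff DERIV_deriv_iff_real_differentiable by blast

lemma sm_cont: "smooth_fun g \<Longrightarrow> continuous_on S g"
  by (meson continuous_at_imp_continuous_on differentiable_imp_continuous_within sm_diff)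

lemma sm_dcont: "smooth_fun g \<Longrightarrow> continuous_on S (deriv g)"
  by (meson continuous_at_imp_continuous_on differentiable_imp_continuous_within sm_ddiff)

lemma comp_has:
  assumes "smooth_fun X" "smooth_fun f"
  shows "((\<lambda>x. X (x + f x)) has_real_derivative deriv X (x + f x) * (1 + deriv f x)) (at x)"
proof -
  have "((\<lambda>x. x + f x) has_real_derivative 1 + deriv f x) (at x)"
    using sm_has[OF assms(2)] by (auto intro!: derivative_eq_intros)
  from DERIV_chain2[OF sm_has[OF assms(1)] this] show ?thesis .
qed

lemma periodic_int:
  fixes G :: "real \<Rightarrow> real"
  assumes cont: "continuous_on UNIV G" and per: "\<And>x. G (x + 2*pi) = G x"
  shows "integral {b..b+2*pi} G = integral {0..2*pi} G"
proof -
  define c where "c = - \<bar>b\<bar> - 1"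
  define M where "M = \<bar>b\<bar> + 1"
  define Q where "Q = (\<lambda>t. integral {c..t+2*pi} G - integral {c..t} G)"
  have cM: "c \<le> M" unfolding c_def M_def by simp
  have d1: "((\<lambda>t. integral {c..t} G) has_real_derivative G t) (at t within {c..M})"
    if "t \<in> {c..M}" for t
  proof -
    have tin: "t \<in> {c..M+2*pi}" using that pi_gt_zero unfolding atLeastAtMost_iff by linarith
    have "((\<lambda>t. integral {c..t} G) has_real_derivative G t) (at t within {c..M+2*pi})"
      by (intro integral_has_real_derivative continuous_on_subset[OF cont] tin) auto
    then show ?thesis
      by (rule DERIV_subset) (use pi_ge_zero in auto)
  qed
  have d2: "((\<lambda>t. integral {c..t+2*pi} G) has_real_derivative G t) (at t within {c..M})"
    if "t \<in> {c..M}" for t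
  proof -
    have tin: "t+2*pi \<in> {c..M+2*pi}" using that pi_gt_zero unfolding atLeastAtMost_iff by linarith
    have A: "((\<lambda>t. integral {c..t} G) has_real_derivative G (t+2*pi)) (at (t+2*pi) within {c..M+2*pi})"
      by (intro integral_has_real_derivative continuous_on_subset[OF cont] tin) auto
    have B: "((\<lambda>t. t + 2*pi) has_real_derivative 1) (at t within {c..M})"
      by (auto intro!: derivative_eq_intros)
    have "((\<lambda>t. integral {c..t} G) \<circ> (\<lambda>t. t + 2*pi) has_real_derivative G (t+2*pi) * 1) (at t within {c..M})"
      by (rule DERIV_image_chain[OF _ B]) (rule DERIV_subset[OF A], auto)
    then show ?thesis using per by (simp add: o_def)
  qed
  have "\<exists>k. \<forall>x\<in>{c..M}. Q x = k"
    apply (rule has_field_derivative_zero_constant)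
     apply simp
    unfolding Q_def
    using DERIV_diff[OF d2 d1] by simp
  then obtain k where k: "\<And>x. x \<in> {c..M} \<Longrightarrow> Q x = k" by blast
  have QI: "Q t = integral {t..t+2*pi} G" if "c \<le> t" for t
  proof -
    have "integral {c..t} G + integral {t..t+2*pi} G = integral {c..t+2*pi} G"
    proof (rule Henstock_Kurzweil_Integration.integral_combine)
      show "c \<le> t" by fact
      show "t \<le> t + 2*pi" using pi_gt_zero by linarith
      show "G integrable_on {c..t + 2*pi}"
        by (rule integrable_continuous_real, rule continuous_on_subset[OF cont]) auto
    qed
    then show ?thesis unfolding Q_def by simp
  qed
  have "integral {b..b+2*pi} G = Q b" using QI[of b] by (simp add: c_def)
  also have "\<dots> = k" by (rule k) (auto simp: c_def M_def)
  also have "\<dots> = Q 0" by (rule k[symmetric]) (auto simp: c_def M_def)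
  also have "\<dots> = integral {0..2*pi} G" using QI[of 0] by (simp add: c_def)
  finally show ?thesis .
qed

lemma sm_cont_comp: "smooth_fun g \<Longrightarrow> continuous_on S u \<Longrightarrow> continuous_on S (\<lambda>x. g (u x))"
  by (rule continuous_on_compose2[OF sm_cont[of g UNIV]]) auto

lemma sm_dcont_comp: "smooth_fun g \<Longrightarrow> continuous_on S u \<Longrightarrow> continuous_on S (\<lambda>x. deriv g (u x))"
  by (rule continuous_on_compose2[OF sm_dcont[of g UNIV]]) auto

lemma deriv_periodic:
  assumes "smooth_fun X" "periodic_2pi X"
  shows "deriv X (x + 2*pi) = deriv X x"
proof -
  have e: "(\<lambda>y. X (y + 2*pi)) = X" using assms(2) unfolding periodic_2pi_def by auto
  have "((\<lambda>y. X (y + 2*pi)) has_real_derivative deriv X (x+2*pi) * 1) (at x)"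
    by (rule DERIV_chain2[OF sm_has[OF assms(1)]]) (auto intro!: derivative_eq_intros)
  then have "(X has_real_derivative deriv X (x+2*pi)) (at x)" using e by simp
  from DERIV_unique[OF this sm_has[OF assms(1)]] show ?thesis .
qed

lemma re_TR:
  fixes b c u v th s :: real
  assumes "s > 0"
  shows "Re ((complex_of_real (1/s * b) * cis th + \<i> * complex_of_real s * cis th * complex_of_real u)
     * cnj (complex_of_real (1/s * c) * cis th + \<i> * complex_of_real s * cis th * complex_of_real v))
     = b*c/s^2 + s^2 * u * v"
proof -
  have e: "cos th * cos th = 1 - sin th * sin th" using sin_cos_squared_add[of th] by (simp add: power2_eq_square)
  show ?thesis using assms by (simp add: field_simps power2_eq_square e)
qed

theorem mainTheorem14:
  fixes f X1 X2 :: "real \<Rightarrow> real"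
  assumes "lift_diff f"
    and "smooth_fun X1" and "periodic_2pi X1"
    and "smooth_fun X2" and "periodic_2pi X2"
  defines "h \<equiv> (\<lambda>x. X1 (x + f x))"
    and "k \<equiv> (\<lambda>x. X2 (x + f x))"
  shows "(\<forall>x. ((\<lambda>t. R_map (\<lambda>y. f y + t * h y) x) has_vector_derivative TR f h x) (at 0))
       \<and> Re (integral {0..2*pi} (\<lambda>x. TR f h x * cnj (TR f k x)))
         = integral {0..2*pi} (\<lambda>x. X1 x * X2 x + deriv X1 x * deriv X2 x)"
proof -
  have f: "smooth_fun f" "periodic_2pi f" "\<And>x. deriv f x > -1"
    using assms(1) unfolding lift_diff_def by auto
  have hder: "\<And>x. (h has_real_derivative deriv X1 (x + f x) * (1 + deriv f x)) (at x)"
    unfolding h_def by (rule comp_has[OF assms(2) f(1)])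
  have kder: "\<And>x. (k has_real_derivative deriv X2 (x + f x) * (1 + deriv f x)) (at x)"
    unfolding k_def by (rule comp_has[OF assms(4) f(1)])
  have dh: "\<And>x. deriv h x = deriv X1 (x + f x) * (1 + deriv f x)"
    using hder by (rule DERIV_imp_deriv)
  have dk: "\<And>x. deriv k x = deriv X2 (x + f x) * (1 + deriv f x)"
    using kder by (rule DERIV_imp_deriv)
  have hder': "\<And>x. (h has_real_derivative deriv h x) (at x)" using hder dh by metis
  have part1: "\<forall>x. ((\<lambda>t. R_map (\<lambda>y. f y + t * h y) x) has_vector_derivative TR f h x) (at 0)"
  proof
    fix x
    define a where "a = deriv f x"
    define b where "b = deriv h x"
    have apos: "1 + a > 0" using f(3)[of x] a_def by simp
    have dd: "deriv (\<lambda>y. f y + t * h y) x = a + t * b" for t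
      unfolding a_def b_def
      by (rule DERIV_imp_deriv, rule DERIV_add[OF sm_has[OF f(1)] DERIV_cmult[OF hder']])
    have fun_eq: "(\<lambda>t. R_map (\<lambda>y. f y + t * h y) x)
        = (\<lambda>t. 2 * complex_of_real (sqrt (1 + (a + t * b))) * cis ((f x + t * h x) / 2))"
      by (auto simp: R_map_def dd)
    have g: "((\<lambda>t. 1 + (a + t * b)) has_real_derivative b) (at 0)"
      by (auto intro!: derivative_eq_intros)
    have sq: "DERIV sqrt (1 + (a + 0 * b)) :> inverse (sqrt (1 + a)) / 2"
      using DERIV_real_sqrt[OF apos] by simp
    have s1: "((\<lambda>t. sqrt (1 + (a + t * b))) has_real_derivative inverse (sqrt (1 + a)) / 2 * b) (at 0)"
      by (rule DERIV_chain2[OF sq g])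
    have c1: "((\<lambda>t. cis ((f x + t * h x) / 2)) has_vector_derivative (h x / 2) *\<^sub>R (\<i> * cis (f x / 2))) (at 0)"
    proof -
      have "((\<lambda>t. (f x + t * h x) / 2) has_derivative (\<lambda>t. t * (h x / 2))) (at 0)"
        by (auto intro!: derivative_eq_intros simp: field_simps)
      from has_derivative_cis[OF this] show ?thesis
        unfolding has_vector_derivative_def by (simp add: scaleR_conv_of_real mult.assoc)
    qed
    have "((\<lambda>t. 2 * complex_of_real (sqrt (1 + (a + t * b))) * cis ((f x + t * h x) / 2)) has_vector_derivative TR f h x) (at 0)"
      apply (rule has_vector_derivative_eq_rhs)
       apply (rule has_vector_derivative_mult[OF has_vector_derivative_mult_right[OF has_vector_derivative_of_real[OF s1]] c1])
      using apos unfolding TR_def a_def[symmetric] b_def[symmetric]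
      by (simp add: scaleR_conv_of_real field_simps)
    then show "((\<lambda>t. R_map (\<lambda>y. f y + t * h y) x) has_vector_derivative TR f h x) (at 0)"
      unfolding fun_eq .
  qed
  define G where "G = (\<lambda>y. X1 y * X2 y + deriv X1 y * deriv X2 y)"
  define F where "F = (\<lambda>x. TR f h x * cnj (TR f k x))"
  have pos: "\<And>x. 1 + deriv f x > 0" using f(3) by (smt (verit))
  have spos: "\<And>x. sqrt (1 + deriv f x) > 0" using pos by simp
  have pw: "Re (F x) = (1 + deriv f x) * G (x + f x)" for x
  proof -
    have "Re (F x) = deriv h x * deriv k x / (sqrt (1 + deriv f x))^2 + (sqrt (1 + deriv f x))^2 * h x * k x"
      unfolding F_def TR_def by (rule re_TR[OF spos])
    also have "\<dots> = (1 + deriv f x) * G (x + f x)"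
      using pos[of x] unfolding dh dk unfolding G_def h_def k_def
      by (simp add: field_simps power2_eq_square)
    finally show ?thesis .
  qed
  have TRh: "TR f h = (\<lambda>x. complex_of_real (1 / sqrt (1 + deriv f x) * (deriv X1 (x + f x) * (1 + deriv f x))) * cis (f x / 2)
             + \<i> * complex_of_real (sqrt (1 + deriv f x)) * cis (f x / 2) * complex_of_real (X1 (x + f x)))"
    unfolding TR_def[abs_def] dh unfolding h_def by simp
  have TRk: "TR f k = (\<lambda>x. complex_of_real (1 / sqrt (1 + deriv f x) * (deriv X2 (x + f x) * (1 + deriv f x))) * cis (f x / 2)
             + \<i> * complex_of_real (sqrt (1 + deriv f x)) * cis (f x / 2) * complex_of_real (X2 (x + f x)))"
    unfolding TR_def[abs_def] dk unfolding k_def by simp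
  have nz: "\<And>x. sqrt (1 + deriv f x) \<noteq> 0" using spos by (metis less_irrefl)
  have cid: "continuous_on S (\<lambda>x::real. x + f x)" for S
    by (intro continuous_intros sm_cont[OF f(1)])
  note cc = sm_cont_comp[OF assms(2) cid] sm_cont_comp[OF assms(4) cid]
    sm_dcont_comp[OF assms(2) cid] sm_dcont_comp[OF assms(4) cid]
    sm_cont[OF f(1)] sm_dcont[OF f(1)]
  have contF: "continuous_on {0..2*pi} F"
    unfolding F_def TRh TRk
    using nz
    by (intro continuous_intros cc) auto
  have intF: "F integrable_on {0..2*pi}" by (rule integrable_continuous_real[OF contF])
  have "Re (integral {0..2*pi} F) = integral {0..2*pi} (Re \<circ> F)"
    by (rule integral_linear[OF intF bounded_linear_Re, symmetric])
  also have "\<dots> = integral {0..2*pi} (\<lambda>x. (1 + deriv f x) * G (x + f x))"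
    by (rule integral_cong) (simp add: pw)
  also have "\<dots> = integral {0 + f 0..0 + f 0 + 2*pi} G"
  proof -
    define g where "g = (\<lambda>x::real. x + f x)"
    have gd: "\<And>x. (g has_real_derivative 1 + deriv f x) (at x)"
      unfolding g_def using sm_has[OF f(1)] by (auto intro!: derivative_eq_intros)
    have g2: "g (2*pi) = 0 + f 0 + 2*pi" using f(2) unfolding periodic_2pi_def g_def by (metis add.commute add_0)
    have g0: "g 0 = 0 + f 0" unfolding g_def by simp
    have mono: "g u \<le> g w" if "u \<le> w" for u w
      by (rule DERIV_nonneg_imp_nondecreasing[OF that]) (use gd pos less_imp_le in blast)
    have contG: "continuous_on {g 0..g (2*pi)} G"
      unfolding G_def by (intro continuous_intros sm_cont sm_dcont assms(2,4))
    have "((\<lambda>x. (1 + deriv f x) *\<^sub>R G (g x)) has_integral integral {g 0..g (2*pi)} G) {0..2*pi}"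
    proof (rule has_integral_substitution[OF _ _ _ contG])
      show "0 \<le> 2*pi" by simp
      show "g 0 \<le> g (2*pi)" by (rule mono) simp
      show "g ` {0..2 * pi} \<subseteq> {g 0..g (2 * pi)}" using mono by auto
      show "(g has_real_derivative 1 + deriv f x) (at x within {0..2 * pi})" for x
        using gd by (rule DERIV_subset) simp
    qed
    then show ?thesis unfolding g0 g2 by (simp add: g_def integral_unique)
  qed
  also have "\<dots> = integral {0..2*pi} G"
  proof (rule periodic_int)
    show "continuous_on UNIV G"
      unfolding G_def by (intro continuous_intros sm_cont sm_dcont assms(2,4))
    show "G (x + 2 * pi) = G x" for x
      unfolding G_def using assms(3,5) deriv_periodic[OF assms(2,3)] deriv_periodic[OF assms(4,5)]
      unfolding periodic_2pi_def by simp
  qed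
  finally show ?thesis using part1 unfolding F_def G_def by simp
qed

end
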